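(* Consider the optimistic planning procedure with budget $N$. (i) If the procedure stops at a step $n<N$ because the selected node $i_n$ has depth $d$, then $v^*-v(i_n)=0$. (ii) Otherwise, if there exist $\lambda\in(1/K,1]$ and an integer $1\le d_0\le d$ such that $p_l((d-l)\Delta)\le\lambda^l$ for all $d_0\le l\le d$, then for $N>n_0:=\frac{K^{d_0+1}-1}{K-1}$ the output node $i_N$ satisfies $$v^*-v(i_N)\le\Big(d-\frac{\log(N-n_0)}{\log(\lambda K)}-\frac{\log(\lambda K-1)}{\log(\lambda K)}+1\Big)\Delta.$$
   Context: Fix $K\ge2$ arms, $\mathcal Z=\{0,\dots,z_{\max}\}$, a depth $d\ge1$, a root state $\mathbf z\in\mathcal Z^K$, and real numbers $\tilde f_j(z)$ for all arms $j$ and $z\in\mathcal Z$. The tree: a node of depth $l$ is a sequence of $l$ arms; its children append one arm. Each node $i$ carries a state $\mathbf z(i)\in\mathcal Z^K$ obtained from the root by the rule: playing arm $j$ from state $\mathbf z$ gives reward $\tilde f_j(z_j)$ and new state with $z_j\mapsto0$ and $z_{j'}\mapsto\min\{z_{\max},z_{j'}+1\}$ for $j'\ne j$. For a node $i$ of depth $l(i)$: $u(i)$ is the sum of rewards along the path from the root to $i$; $v(i)=u(i)+$ the maximum over continuations of $i$ to depth $d$ of the sum of rewards of the remaining $d-l(i)$ steps; $v^*=\max\{v(i): i\text{ of depth }d\}$. For $1\le l\le d$, $g_j(z,l)=\max\{\tilde f_j(z),\tilde f_j(\min(z+1,z_{\max})),\dots,\tilde f_j(\min(z+l,z_{\max})),\tilde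 f_j(0),\dots,\tilde f_j(\min(l,z_{\max}))\}$; $\Psi(\mathbf z,m)=m\max_jg_j(z_j,m)$ for $m\ge1$ and $\Psi(\mathbf z,0)=0$; $b(i)=u(i)+\Psi(\mathbf z(i),d-l(i))$. Procedure: set $\mathcal T_0=\emptyset$, $\mathcal S_0=\{\text{root}\}$. At step $n=0,1,\dots,N-1$ select $i_n\in\arg\max_{i\in\mathcal S_n}b(i)$; if $i_n$ has depth $d$, stop and output $i_n$; otherwise move $i_n$ from $\mathcal S_n$ to $\mathcal T_{n+1}=\mathcal T_n\cup\{i_n\}$ and add its $K$ children, giving $\mathcal S_{n+1}$. If not stopped after $N$ expansions, let $d_N$ be the maximal depth of nodes in $\mathcal T_N$ and output $i_N$, a node of depth $d_N$ in $\mathcal T_N$ with largest $b$. Let $\Delta=\max_{j,z}\tilde f_j(z)-\min\{\min_{j,z}\tilde f_j(z),0\}$. A node $i$ is $\epsilon$-optimal if $v^*-v(i)\le\epsilon$; $p_l(\epsilon)$ is the proportion of the $K^l$ nodes of depth $l$ that are $\epsilon$-optimal. *)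

theory Defs
  imports Complex_Main
begin

text \<open>Arms are the naturals 0,...,K-1. A state is a function nat => nat (only values
on arms j < K matter). A node is a list of arms (the path from the root, root = []),
its children are obtained by appending one arm at the end.\<close>

definition step :: "nat \<Rightarrow> (nat \<Rightarrow> nat) \<Rightarrow> nat \<Rightarrow> (nat \<Rightarrow> nat)" where
  "step zmax z j = (\<lambda>j'. if j' = j then 0 else min zmax (z j' + 1))"

definition state :: "nat \<Rightarrow> (nat \<Rightarrow> nat) \<Rightarrow> nat list \<Rightarrow> (nat \<Rightarrow> nat)" where
  "state zmax z0 i = foldl (step zmax) z0 i"

fun rew :: "(nat \<Rightarrow> nat \<Rightarrow> real) \<Rightarrow> nat \<Rightarrow> (nat \<Rightarrow> nat) \<Rightarrow> nat list \<Rightarrow> real" where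
  "rew f zmax z [] = 0"
| "rew f zmax z (j # js) = f j (z j) + rew f zmax (step zmax z j) js"

definition nodes :: "nat \<Rightarrow> nat \<Rightarrow> nat list set" where
  "nodes K m = {c. length c = m \<and> set c \<subseteq> {..<K}}"

definition uval :: "(nat \<Rightarrow> nat \<Rightarrow> real) \<Rightarrow> nat \<Rightarrow> (nat \<Rightarrow> nat) \<Rightarrow> nat list \<Rightarrow> real" where
  "uval f zmax z0 i = rew f zmax z0 i"

definition vval :: "nat \<Rightarrow> (nat \<Rightarrow> nat \<Rightarrow> real) \<Rightarrow> nat \<Rightarrow> (nat \<Rightarrow> nat) \<Rightarrow> nat \<Rightarrow> nat list \<Rightarrow> real" where
  "vval K f zmax z0 d i = uval f zmax z0 i
     + Max ((\<lambda>c. rew f zmax (state zmax z0 i) c) ` nodes K (d - length i))"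

definition vstar :: "nat \<Rightarrow> (nat \<Rightarrow> nat \<Rightarrow> real) \<Rightarrow> nat \<Rightarrow> (nat \<Rightarrow> nat) \<Rightarrow> nat \<Rightarrow> real" where
  "vstar K f zmax z0 d = Max (vval K f zmax z0 d ` nodes K d)"

definition gfun :: "(nat \<Rightarrow> nat \<Rightarrow> real) \<Rightarrow> nat \<Rightarrow> nat \<Rightarrow> nat \<Rightarrow> nat \<Rightarrow> real" where
  "gfun f zmax j z l = Max ((\<lambda>k. f j (min (z + k) zmax)) ` {0..l} \<union> (\<lambda>k. f j (min k zmax)) ` {0..l})"

definition Psi :: "nat \<Rightarrow> (nat \<Rightarrow> nat \<Rightarrow> real) \<Rightarrow> nat \<Rightarrow> (nat \<Rightarrow> nat) \<Rightarrow> nat \<Rightarrow> real" where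
  "Psi K f zmax zs m = (if m = 0 then 0 else real m * Max ((\<lambda>j. gfun f zmax j (zs j) m) ` {..<K}))"

definition bval :: "nat \<Rightarrow> (nat \<Rightarrow> nat \<Rightarrow> real) \<Rightarrow> nat \<Rightarrow> (nat \<Rightarrow> nat) \<Rightarrow> nat \<Rightarrow> nat list \<Rightarrow> real" where
  "bval K f zmax z0 d i = uval f zmax z0 i + Psi K f zmax (state zmax z0 i) (d - length i)"

definition children :: "nat \<Rightarrow> nat list \<Rightarrow> nat list set" where
  "children K i = (\<lambda>j. i @ [j]) ` {..<K}"

fun Sset :: "nat \<Rightarrow> (nat \<Rightarrow> nat list) \<Rightarrow> nat \<Rightarrow> nat list set" where
  "Sset K sel 0 = {[]}"
| "Sset K sel (Suc n) = (Sset K sel n - {sel n}) \<union> children K (sel n)"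

definition Tset :: "(nat \<Rightarrow> nat list) \<Rightarrow> nat \<Rightarrow> nat list set" where
  "Tset sel n = sel ` {..<n}"

definition Delta :: "nat \<Rightarrow> (nat \<Rightarrow> nat \<Rightarrow> real) \<Rightarrow> nat \<Rightarrow> real" where
  "Delta K f zmax = Max {f j z | j z. j < K \<and> z \<le> zmax}
      - min (Min {f j z | j z. j < K \<and> z \<le> zmax}) 0"

definition prop_opt :: "nat \<Rightarrow> (nat \<Rightarrow> nat \<Rightarrow> real) \<Rightarrow> nat \<Rightarrow> (nat \<Rightarrow> nat) \<Rightarrow> nat \<Rightarrow> nat \<Rightarrow> real \<Rightarrow> real" where
  "prop_opt K f zmax z0 d l eps =
     real (card {i \<in> nodes K l. vstar K f zmax z0 d - vval K f zmax z0 d i \<le> eps}) / real K ^ l"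

end

theory Submission
  imports Defs "HOL-Library.Sublist"
begin


lemma rew_append: "rew f zmax z (a @ b) = rew f zmax z a + rew f zmax (foldl (step zmax) z a) b"
  by (induction a arbitrary: z) auto

lemma state_snoc: "state zmax z0 (i @ [j]) = step zmax (state zmax z0 i) j"
  by (simp add: state_def)

lemma state_bound: "\<forall>j<K. z0 j \<le> zmax \<Longrightarrow> \<forall>j<K. state zmax z0 i j \<le> zmax"
  by (induction i rule: rev_induct) (simp_all add: state_snoc step_def, simp add: state_def)

lemma nodes_finite: "finite (nodes K m)"
  unfolding nodes_def using finite_lists_length_eq[of "{..<K}" m] by (simp add: conj_commute)

lemma replicate_nodes: "0 < K \<Longrightarrow> replicate m 0 \<in> nodes K m"
  by (auto simp: nodes_def)

lemma nodes_0: "nodes K 0 = {[]}" by (auto simp: nodes_def)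

lemma card_nodes: "card (nodes K m) = K ^ m"
  unfolding nodes_def using card_lists_length_eq[of "{..<K}" m] by (simp add: conj_commute)

lemma FS_eq:
  fixes f :: "nat \<Rightarrow> nat \<Rightarrow> real" and K zmax :: nat
  shows "{f j z | j z. j < K \<and> z \<le> zmax} = (\<lambda>(j,z). f j z) ` ({..<K} \<times> {..zmax})"
  by auto

lemma FS_fin:
  fixes f :: "nat \<Rightarrow> nat \<Rightarrow> real" and K zmax :: nat
  shows "finite {f j z | j z. j < K \<and> z \<le> zmax}"
  unfolding FS_eq by (intro finite_imageI finite_cartesian_product) auto

lemma FS_ne:
  fixes f :: "nat \<Rightarrow> nat \<Rightarrow> real" and K zmax :: nat
  shows "0 < K \<Longrightarrow> {f j z | j z. j < K \<and> z \<le> zmax} \<noteq> {}"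
proof -
  assume "0 < K"
  then have "f 0 0 \<in> {f j z | j z. j < K \<and> z \<le> zmax}" by auto
  then show ?thesis by (intro notI) simp
qed

lemma FS_le:
  fixes f :: "nat \<Rightarrow> nat \<Rightarrow> real" and K zmax :: nat
  shows "j < K \<Longrightarrow> z \<le> zmax \<Longrightarrow> f j z \<le> Max {f j z | j z. j < K \<and> z \<le> zmax}"
  by (rule Max_ge[OF FS_fin]) auto

lemma FS_ge:
  fixes f :: "nat \<Rightarrow> nat \<Rightarrow> real" and K zmax :: nat
  shows "j < K \<Longrightarrow> z \<le> zmax \<Longrightarrow> Min {f j z | j z. j < K \<and> z \<le> zmax} \<le> f j z"
  by (rule Min_le[OF FS_fin]) auto

lemma rew_le_G:
  fixes f :: "nat \<Rightarrow> nat \<Rightarrow> real"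
  shows "\<forall>z' k. (\<forall>j<K. z' j = min (z j + k) zmax \<or> (\<exists>k'\<le>k. z' j = min k' zmax)) \<longrightarrow> set c \<subseteq> {..<K} \<longrightarrow> k + length c \<le> m \<longrightarrow>
     rew f zmax z' c \<le> real (length c) * Max ((\<lambda>j. gfun f zmax j (z j) m) ` {..<K})"
proof (induction c)
  case Nil
  then show ?case by simp
next
  case (Cons j cs)
  show ?case
  proof (intro allI impI)
    fix z' k
    assume h: "\<forall>j<K. z' j = min (z j + k) zmax \<or> (\<exists>k'\<le>k. z' j = min k' zmax)"
      and s: "set (j # cs) \<subseteq> {..<K}" and l: "k + length (j # cs) \<le> m"
    let ?G = "Max ((\<lambda>j. gfun f zmax j (z j) m) ` {..<K})"
    have jK: "j < K" using s by auto
    have fin: "finite ((\<lambda>k. f j (min (z j + k) zmax)) ` {0..m} \<union> (\<lambda>k. f j (min k zmax)) ` {0..m})" by auto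
    have "f j (z' j) \<le> gfun f zmax j (z j) m"
      unfolding gfun_def
    proof (rule Max_ge[OF fin])
      show "f j (z' j) \<in> (\<lambda>k. f j (min (z j + k) zmax)) ` {0..m} \<union> (\<lambda>k. f j (min k zmax)) ` {0..m}"
        using h[rule_format, OF jK] l by fastforce
    qed
    also have "\<dots> \<le> ?G" by (rule Max_ge) (use jK in auto)
    finally have 1: "f j (z' j) \<le> ?G" .
    have h2: "\<forall>j'<K. step zmax z' j j' = min (z j' + (k+1)) zmax \<or> (\<exists>k'\<le>k+1. step zmax z' j j' = min k' zmax)"
    proof (intro allI impI)
      fix j' assume j': "j' < K"
      show "step zmax z' j j' = min (z j' + (k+1)) zmax \<or> (\<exists>k'\<le>k+1. step zmax z' j j' = min k' zmax)"
      proof (cases "j' = j")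
        case True then show ?thesis by (auto simp: step_def intro: exI[of _ 0])
      next
        case False
        from h[rule_format, OF j'] show ?thesis
        proof
          assume "z' j' = min (z j' + k) zmax"
          then show ?thesis using False by (auto simp: step_def min_def)
        next
          assume "\<exists>k'\<le>k. z' j' = min k' zmax"
          then obtain k' where "k' \<le> k" "z' j' = min k' zmax" by blast
          then show ?thesis using False by (auto simp: step_def min_def intro!: exI[of _ "k'+1"])
        qed
      qed
    qed
    have 2: "rew f zmax (step zmax z' j) cs \<le> real (length cs) * ?G"
      by (rule Cons.IH[rule_format, of _ "k+1"]) (use h2 s l in auto)
    show "rew f zmax z' (j # cs) \<le> real (length (j # cs)) * ?G"
      using 1 2 by (simp add: algebra_simps)
  qed
qed

lemma rew_le_Psi:
  fixes f :: "nat \<Rightarrow> nat \<Rightarrow> real"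
  assumes zb: "\<forall>j<K. z j \<le> zmax" and c: "set c \<subseteq> {..<K}"
  shows "rew f zmax z c \<le> Psi K f zmax z (length c)"
proof (cases "c = []")
  case True then show ?thesis by (simp add: Psi_def)
next
  case False
  have "\<forall>j<K. z j = min (z j + 0) zmax \<or> (\<exists>k'\<le>0. z j = min k' zmax)" using zb by auto
  then have "rew f zmax z c \<le> real (length c) * Max ((\<lambda>j. gfun f zmax j (z j) (length c)) ` {..<K})"
    using rew_le_G[of K z zmax c "length c" f] c by auto
  then show ?thesis using False by (simp add: Psi_def)
qed

lemma rew_ge:
  fixes f :: "nat \<Rightarrow> nat \<Rightarrow> real"
  shows "\<forall>z. (\<forall>j<K. z j \<le> zmax) \<longrightarrow> set c \<subseteq> {..<K} \<longrightarrow>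
     real (length c) * Min {f j z | j z. j < K \<and> z \<le> zmax} \<le> rew f zmax z c"
proof (induction c)
  case Nil then show ?case by simp
next
  case (Cons j cs)
  show ?case
  proof (intro allI impI)
    fix z assume zb: "\<forall>j<K. z j \<le> zmax" and s: "set (j # cs) \<subseteq> {..<K}"
    have 1: "Min {f j z | j z. j < K \<and> z \<le> zmax} \<le> f j (z j)"
      using FS_ge[of j K "z j" zmax f] zb s by auto
    have "\<forall>j'<K. step zmax z j j' \<le> zmax" by (simp add: step_def)
    then have 2: "real (length cs) * Min {f j z | j z. j < K \<and> z \<le> zmax} \<le> rew f zmax (step zmax z j) cs"
      using Cons.IH s by auto
    show "real (length (j # cs)) * Min {f j z | j z. j < K \<and> z \<le> zmax} \<le> rew f zmax z (j # cs)"
      using 1 2 by (simp add: algebra_simps)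
  qed
qed

lemma rew_ge':
  fixes f :: "nat \<Rightarrow> nat \<Rightarrow> real"
  shows "\<forall>j<K. z j \<le> zmax \<Longrightarrow> set c \<subseteq> {..<K} \<Longrightarrow>
     real (length c) * Min {f j z | j z. j < K \<and> z \<le> zmax} \<le> rew f zmax z c"
  using rew_ge by blast

lemma gfun_le:
  fixes f :: "nat \<Rightarrow> nat \<Rightarrow> real"
  assumes "j < K"
  shows "gfun f zmax j w m \<le> Max {f j z | j z. j < K \<and> z \<le> zmax}"
  unfolding gfun_def
  by (subst Max_le_iff) (auto intro!: FS_le assms)

lemma Psi_le:
  fixes f :: "nat \<Rightarrow> nat \<Rightarrow> real"
  assumes "0 < K"
  shows "Psi K f zmax z m \<le> real m * Max {f j z | j z. j < K \<and> z \<le> zmax}"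
proof (cases "m = 0")
  case True then show ?thesis by (simp add: Psi_def)
next
  case False
  have "Max ((\<lambda>j. gfun f zmax j (z j) m) ` {..<K}) \<le> Max {f j z | j z. j < K \<and> z \<le> zmax}"
    using assms by (subst Max_le_iff) (auto intro!: gfun_le)
  then show ?thesis using False by (simp add: Psi_def mult_left_mono)
qed

lemma Delta_ge:
  fixes f :: "nat \<Rightarrow> nat \<Rightarrow> real"
  shows "Max {f j z | j z. j < K \<and> z \<le> zmax} - Min {f j z | j z. j < K \<and> z \<le> zmax} \<le> Delta K f zmax"
  unfolding Delta_def by linarith

lemma Delta_nonneg:
  fixes f :: "nat \<Rightarrow> nat \<Rightarrow> real"
  assumes "0 < K"
  shows "0 \<le> Delta K f zmax"
proof -
  have "Min {f j z | j z. j < K \<and> z \<le> zmax} \<le> Max {f j z | j z. j < K \<and> z \<le> zmax}"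
    using FS_ge[of 0 K 0 zmax f] FS_le[of 0 K 0 zmax f] assms by linarith
  then show ?thesis using Delta_ge[of f K zmax] by linarith
qed

context
  fixes K zmax :: nat and z0 :: "nat \<Rightarrow> nat" and f :: "nat \<Rightarrow> nat \<Rightarrow> real" and d :: nat
  assumes K: "K \<ge> 2" and root: "\<forall>j<K. z0 j \<le> zmax"
begin

lemma Kpos: "0 < K" using K by simp

lemma v_le_b: "vval K f zmax z0 d i \<le> bval K f zmax z0 d i"
proof -
  have "Max ((\<lambda>c. rew f zmax (state zmax z0 i) c) ` nodes K (d - length i))
      \<le> Psi K f zmax (state zmax z0 i) (d - length i)"
  proof (subst Max_le_iff)
    show "finite ((\<lambda>c. rew f zmax (state zmax z0 i) c) ` nodes K (d - length i))"
      by (intro finite_imageI nodes_finite)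
    show "(\<lambda>c. rew f zmax (state zmax z0 i) c) ` nodes K (d - length i) \<noteq> {}"
      using replicate_nodes[OF Kpos] by blast
    show "\<forall>a\<in>(\<lambda>c. rew f zmax (state zmax z0 i) c) ` nodes K (d - length i).
        a \<le> Psi K f zmax (state zmax z0 i) (d - length i)"
    proof
      fix a assume "a \<in> (\<lambda>c. rew f zmax (state zmax z0 i) c) ` nodes K (d - length i)"
      then obtain c where c: "c \<in> nodes K (d - length i)" and a: "a = rew f zmax (state zmax z0 i) c" by blast
      have "a \<le> Psi K f zmax (state zmax z0 i) (length c)"
        unfolding a using c by (intro rew_le_Psi state_bound root) (auto simp: nodes_def)
      then show "a \<le> Psi K f zmax (state zmax z0 i) (d - length i)" using c by (simp add: nodes_def)
    qed
  qed
  then show ?thesis by (simp add: vval_def bval_def)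
qed

lemma b_le_v: "bval K f zmax z0 d i \<le> vval K f zmax z0 d i + real (d - length i) * Delta K f zmax"
proof -
  let ?m = "d - length i"
  let ?S = "{f j z | j z. j < K \<and> z \<le> zmax}"
  have r: "replicate ?m 0 \<in> nodes K ?m" by (rule replicate_nodes[OF Kpos])
  have "real ?m * Min ?S \<le> rew f zmax (state zmax z0 i) (replicate ?m 0)"
    using rew_ge'[where f=f and K=K and zmax=zmax and c="replicate ?m 0", OF state_bound[OF root, of i]] Kpos
    by (auto simp: set_replicate_conv_if)
  also have "\<dots> \<le> Max ((\<lambda>c. rew f zmax (state zmax z0 i) c) ` nodes K ?m)"
    by (rule Max_ge) (use r nodes_finite in auto)
  finally have 1: "real ?m * Min ?S \<le> Max ((\<lambda>c. rew f zmax (state zmax z0 i) c) ` nodes K ?m)" .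
  have 2: "Psi K f zmax (state zmax z0 i) ?m \<le> real ?m * Max ?S" by (rule Psi_le[OF Kpos])
  have 3: "real ?m * Max ?S - real ?m * Min ?S \<le> real ?m * Delta K f zmax"
    using Delta_ge[of f K zmax] by (simp add: right_diff_distrib[symmetric] mult_left_mono)
  show ?thesis using 1 2 3 by (simp add: vval_def bval_def)
qed

lemma v_prefix:
  assumes "length (i @ c) = d" "set c \<subseteq> {..<K}"
  shows "vval K f zmax z0 d (i @ c) \<le> vval K f zmax z0 d i"
proof -
  have c: "c \<in> nodes K (d - length i)" using assms by (auto simp: nodes_def)
  have "vval K f zmax z0 d (i @ c) = uval f zmax z0 (i @ c)"
    using assms(1) by (simp add: vval_def nodes_0)
  also have "\<dots> = uval f zmax z0 i + rew f zmax (state zmax z0 i) c"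
    by (simp add: uval_def rew_append state_def)
  also have "\<dots> \<le> vval K f zmax z0 d i"
    unfolding vval_def by (simp, rule Max_ge) (use c nodes_finite in auto)
  finally show ?thesis .
qed

lemma vstar_attained: "\<exists>l\<in>nodes K d. vstar K f zmax z0 d = vval K f zmax z0 d l"
proof -
  have "vstar K f zmax z0 d \<in> vval K f zmax z0 d ` nodes K d"
    unfolding vstar_def by (rule Max_in) (use nodes_finite replicate_nodes[OF Kpos] in auto)
  then show ?thesis by auto
qed

lemma vstar_ge: "l \<in> nodes K d \<Longrightarrow> vval K f zmax z0 d l \<le> vstar K f zmax z0 d"
  unfolding vstar_def by (rule Max_ge) (use nodes_finite in auto)

end


lemma Tset_Suc: "Tset sel (Suc n) = insert (sel n) (Tset sel n)"
  by (simp add: Tset_def lessThan_Suc)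

lemma children_iff: "x \<in> children K s \<longleftrightarrow> (\<exists>j<K. x = s @ [j])"
  by (auto simp: children_def)

lemma invariants:
  assumes "\<forall>m<n. sel m \<in> Sset K sel m \<and> length (sel m) < d"
  shows "(\<forall>x\<in>Sset K sel n. set x \<subseteq> {..<K})
       \<and> (\<forall>x\<in>Sset K sel n. \<forall>t\<in>Tset sel n. \<not> prefix x t)
       \<and> (\<forall>x\<in>Sset K sel n. \<forall>y\<in>Sset K sel n. prefix x y \<longrightarrow> x = y)
       \<and> (\<forall>c\<in>nodes K d. \<exists>x\<in>Sset K sel n. prefix x c)"
  using assms
proof (induction n)
  case 0 then show ?case by (simp add: Tset_def)
next
  case (Suc n)
  let ?s = "sel n"
  have pr: "\<forall>m<n. sel m \<in> Sset K sel m \<and> length (sel m) < d" using Suc.prems less_SucI by blast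
  have sS: "?s \<in> Sset K sel n" and sl: "length ?s < d" using Suc.prems lessI by blast+
  have IH: "(\<forall>x\<in>Sset K sel n. set x \<subseteq> {..<K})
       \<and> (\<forall>x\<in>Sset K sel n. \<forall>t\<in>Tset sel n. \<not> prefix x t)
       \<and> (\<forall>x\<in>Sset K sel n. \<forall>y\<in>Sset K sel n. prefix x y \<longrightarrow> x = y)
       \<and> (\<forall>c\<in>nodes K d. \<exists>x\<in>Sset K sel n. prefix x c)" by (rule Suc.IH[OF pr])
  then have A: "\<And>x. x\<in>Sset K sel n \<Longrightarrow> set x \<subseteq> {..<K}"
    and B: "\<And>x t. x\<in>Sset K sel n \<Longrightarrow> t\<in>Tset sel n \<Longrightarrow> \<not> prefix x t"
    and C: "\<And>x y. x\<in>Sset K sel n \<Longrightarrow> y\<in>Sset K sel n \<Longrightarrow> prefix x y \<Longrightarrow> x = y"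
    and D: "\<And>c. c\<in>nodes K d \<Longrightarrow> \<exists>x\<in>Sset K sel n. prefix x c" by blast+
  have SS: "\<And>x. x \<in> Sset K sel (Suc n) \<longleftrightarrow> (x \<in> Sset K sel n \<and> x \<noteq> ?s) \<or> (\<exists>j<K. x = ?s @ [j])"
    by (auto simp: children_iff)
  show ?case
  proof (intro conjI ballI impI)
    fix x assume "x \<in> Sset K sel (Suc n)"
    then have "x \<in> Sset K sel n \<or> (\<exists>j<K. x = ?s @ [j])" unfolding SS by blast
    then show "set x \<subseteq> {..<K}"
    proof
      assume "x \<in> Sset K sel n" then show ?thesis by (rule A)
    next
      assume "\<exists>j<K. x = ?s @ [j]"
      then obtain j where "j < K" "x = ?s @ [j]" by blast
      then show ?thesis using A[OF sS] by simp
    qed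
  next
    fix x t assume x: "x \<in> Sset K sel (Suc n)" and t: "t \<in> Tset sel (Suc n)"
    show "\<not> prefix x t"
    proof
      assume p: "prefix x t"
      from x[unfolded SS] show False
      proof
        assume x1: "x \<in> Sset K sel n \<and> x \<noteq> ?s"
        show False
        proof (cases "t = ?s")
          case True
          have "x = ?s" using C[OF _ sS] x1 p True by blast
          then show False using x1 by blast
        next
          case False then have "t \<in> Tset sel n" using t Tset_Suc by auto
          then show False using B x1 p by auto
        qed
      next
        assume "\<exists>j<K. x = ?s @ [j]"
        then obtain j where x2: "x = ?s @ [j]" by blast
        have ps: "prefix ?s t" using prefix_snocD[of ?s j t] p x2 by (simp add: prefix_order.less_imp_le)
        show False
        proof (cases "t = ?s")
          case True
          have "length x \<le> length t" using p by (rule prefix_length_le)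
          then show False using x2 True by simp
        next
          case False then have "t \<in> Tset sel n" using t Tset_Suc by auto
          then show False using B[OF sS] ps by auto
        qed
      qed
    qed
  next
    fix x y assume x: "x \<in> Sset K sel (Suc n)" and y: "y \<in> Sset K sel (Suc n)" and p: "prefix x y"
    show "x = y"
    proof (cases "\<exists>j<K. y = ?s @ [j]")
      case True
      then obtain j where y2: "y = ?s @ [j]" by blast
      from p[unfolded y2] have "x = ?s @ [j] \<or> prefix x ?s" by simp
      then show ?thesis
      proof
        assume "x = ?s @ [j]" then show ?thesis using y2 by simp
      next
        assume px: "prefix x ?s"
        from x[unfolded SS] show ?thesis
        proof
          assume "x \<in> Sset K sel n \<and> x \<noteq> ?s" then show ?thesis using C[OF _ sS px] by auto
        next
          assume "\<exists>j<K. x = ?s @ [j]"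
          then obtain j' where "x = ?s @ [j']" by blast
          moreover have "length x \<le> length ?s" using px by (rule prefix_length_le)
          ultimately show ?thesis by simp
        qed
      qed
    next
      case False
      then have y1: "y \<in> Sset K sel n \<and> y \<noteq> ?s" using y SS by auto
      from x[unfolded SS] show ?thesis
      proof
        assume "x \<in> Sset K sel n \<and> x \<noteq> ?s" then show ?thesis using C y1 p by auto
      next
        assume "\<exists>j<K. x = ?s @ [j]"
        then obtain j where x2: "x = ?s @ [j]" by blast
        have "prefix ?s y" using prefix_snocD[of ?s j y] p x2 by (simp add: prefix_order.less_imp_le)
        then show ?thesis using C[OF sS] y1 by auto
      qed
    qed
  next
    fix c assume c: "c \<in> nodes K d"
    obtain x where x: "x \<in> Sset K sel n" and px: "prefix x c" using D[OF c] by blast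
    show "\<exists>x\<in>Sset K sel (Suc n). prefix x c"
    proof (cases "x = ?s")
      case False then show ?thesis using x px SS by blast
    next
      case True
      obtain zs where czs: "c = ?s @ zs" using px True by (auto simp: prefix_def)
      have "length c = d" using c by (simp add: nodes_def)
      then obtain j zs' where "zs = j # zs'" using sl czs by (cases zs) auto
      then have "j < K" "prefix (?s @ [j]) c" using c czs by (auto simp: nodes_def)
      then show ?thesis using SS by blast
    qed
  qed
qed



theorem proposition2:
  fixes K zmax d N :: nat and z0 :: "nat \<Rightarrow> nat" and f :: "nat \<Rightarrow> nat \<Rightarrow> real"
    and sel :: "nat \<Rightarrow> nat list"
  assumes K: "K \<ge> 2" and d: "d \<ge> 1"
    and root: "\<forall>j<K. z0 j \<le> zmax"
    and selection: "\<forall>n<N. (\<forall>m<n. length (sel m) < d) \<longrightarrow>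
        sel n \<in> Sset K sel n \<and> (\<forall>i\<in>Sset K sel n. bval K f zmax z0 d i \<le> bval K f zmax z0 d (sel n))"
  shows "(\<forall>n<N. (\<forall>m<n. length (sel m) < d) \<and> length (sel n) = d \<longrightarrow>
            vstar K f zmax z0 d - vval K f zmax z0 d (sel n) = 0)
       \<and> ((\<forall>n<N. length (sel n) < d) \<longrightarrow>
          (\<forall>(lam::real) (d0::nat) iN.
             1 / real K < lam \<and> lam \<le> 1 \<and> 1 \<le> d0 \<and> d0 \<le> d
             \<and> (\<forall>l. d0 \<le> l \<and> l \<le> d \<longrightarrow>
                   prop_opt K f zmax z0 d l (real (d - l) * Delta K f zmax) \<le> lam ^ l)
             \<and> real N > (real K ^ (d0 + 1) - 1) / (real K - 1)
             \<and> iN \<in> Tset sel N \<and> length iN = Max (length ` Tset sel N)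
             \<and> (\<forall>i\<in>Tset sel N. length i = Max (length ` Tset sel N) \<longrightarrow>
                   bval K f zmax z0 d i \<le> bval K f zmax z0 d iN)
             \<longrightarrow> vstar K f zmax z0 d - vval K f zmax z0 d iN
                 \<le> (real d - ln (real N - (real K ^ (d0 + 1) - 1) / (real K - 1)) / ln (lam * real K)
                     - ln (lam * real K - 1) / ln (lam * real K) + 1) * Delta K f zmax))"
proof -
  have Kp: "0 < K" using K by simp
  let ?v = "vval K f zmax z0 d" and ?b = "bval K f zmax z0 d" and ?vs = "vstar K f zmax z0 d"
    and ?D = "Delta K f zmax"
  have pr_of: "\<forall>m<n. sel m \<in> Sset K sel m \<and> length (sel m) < d"
    if n: "n \<le> N" and pl: "\<forall>m<n. length (sel m) < d" for n
  proof (intro allI impI)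
    fix m assume m: "m < n"
    have "\<forall>m'<m. length (sel m') < d" using pl m by auto
    then show "sel m \<in> Sset K sel m \<and> length (sel m) < d" using selection m n pl by auto
  qed
  have opt: "?vs \<le> ?b (sel n) \<and> sel n \<in> Sset K sel n \<and> set (sel n) \<subseteq> {..<K}"
    if n: "n < N" and pl: "\<forall>m<n. length (sel m) < d" for n
  proof -
    note inv = invariants[OF pr_of[OF _ pl]]
    have selS: "sel n \<in> Sset K sel n" and selmax: "\<forall>i\<in>Sset K sel n. ?b i \<le> ?b (sel n)"
      using selection n pl by auto
    obtain l where l: "l \<in> nodes K d" and vl: "?vs = ?v l" using vstar_attained[OF K root] by blast
    obtain x where x: "x \<in> Sset K sel n" "prefix x l" using inv l n by auto
    obtain c where lc: "l = x @ c" using x(2) by (auto simp: prefix_def)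
    have "?v l \<le> ?v x"
      unfolding lc by (rule v_prefix[OF K root]) (use l lc in \<open>auto simp: nodes_def\<close>)
    also have "\<dots> \<le> ?b x" by (rule v_le_b[OF K root])
    also have "\<dots> \<le> ?b (sel n)" using selmax x(1) by blast
    finally show ?thesis using vl selS inv n by auto
  qed
  have eps: "?vs - ?v (sel n) \<le> real (d - length (sel n)) * ?D"
    if n: "n < N" and pl: "\<forall>m<n. length (sel m) < d" for n
    using opt[OF n pl] b_le_v[OF K root, of f d "sel n"] by linarith
  show ?thesis
  proof (intro conjI allI impI)
    fix n assume n: "n < N" and h: "(\<forall>m<n. length (sel m) < d) \<and> length (sel n) = d"
    have "?vs - ?v (sel n) \<le> 0" using eps[OF n] h by simp
    moreover have "sel n \<in> nodes K d" using opt[OF n] h by (auto simp: nodes_def)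
    then have "?v (sel n) \<le> ?vs" by (rule vstar_ge[OF K root])
    ultimately show "?vs - ?v (sel n) = 0" by linarith
  next
    fix lam :: real and d0 :: nat and iN
    assume allN: "\<forall>n<N. length (sel n) < d"
    assume H: "1 / real K < lam \<and> lam \<le> 1 \<and> 1 \<le> d0 \<and> d0 \<le> d
             \<and> (\<forall>l. d0 \<le> l \<and> l \<le> d \<longrightarrow>
                   prop_opt K f zmax z0 d l (real (d - l) * Delta K f zmax) \<le> lam ^ l)
             \<and> real N > (real K ^ (d0 + 1) - 1) / (real K - 1)
             \<and> iN \<in> Tset sel N \<and> length iN = Max (length ` Tset sel N)
             \<and> (\<forall>i\<in>Tset sel N. length i = Max (length ` Tset sel N) \<longrightarrow>
                   bval K f zmax z0 d i \<le> bval K f zmax z0 d iN)"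
    then have lam1: "1 / real K < lam" and d0: "d0 \<le> d"
      and popt: "\<And>l. d0 \<le> l \<Longrightarrow> l \<le> d \<Longrightarrow> prop_opt K f zmax z0 d l (real (d - l) * ?D) \<le> lam ^ l"
      and Nbig: "real N > (real K ^ (d0 + 1) - 1) / (real K - 1)"
      and iN: "iN \<in> Tset sel N" and iNl: "length iN = Max (length ` Tset sel N)"
      by auto
    define T where "T = Tset sel N"
    define Dn where "Dn = Max (length ` T)"
    define x where "x = lam * real K"
    define n0 where "n0 = (real K ^ (d0 + 1) - 1) / (real K - 1)"
    have x1: "x > 1" using lam1 Kp by (simp add: x_def field_simps)
    have Kr: "real K > 1" using K by simp
    have n0eq: "n0 = (\<Sum>l<d0+1. real K ^ l)"
      unfolding n0_def by (rule geometric_sum[symmetric]) (use Kr in simp)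
    have n0pos: "n0 > 0"
    proof -
      have "real K ^ (d0+1) > 1" using one_less_power[of "real K" "d0+1"] Kr by simp
      then show ?thesis using Kr by (simp add: n0_def)
    qed
    have Npos: "N > 0" using Nbig n0pos n0_def by (cases N) auto
    have pl: "\<forall>m<n. length (sel m) < d" if "n \<le> N" for n using allN that by auto
    have inj: "inj_on sel {..<N}"
    proof (rule inj_onI)
      fix a b assume a: "a \<in> {..<N}" and b: "b \<in> {..<N}" and e: "sel a = sel b"
      show "a = b"
      proof (rule ccontr)
        assume "a \<noteq> b"
        then consider "a < b" | "b < a" by linarith
        then show False
        proof cases
          case 1
          note inv = invariants[OF pr_of[OF _ pl[of b]]]
          have "sel b \<in> Sset K sel b" using opt[OF _ pl[of b]] b by auto
          moreover have "sel a \<in> Tset sel b" using 1 by (auto simp: Tset_def)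
          ultimately show False using inv b e by auto
        next
          case 2
          note inv = invariants[OF pr_of[OF _ pl[of a]]]
          have "sel a \<in> Sset K sel a" using opt[OF _ pl[of a]] a by auto
          moreover have "sel b \<in> Tset sel a" using 2 by (auto simp: Tset_def)
          ultimately show False using inv a e by auto
        qed
      qed
    qed
    have cardT: "card T = N" unfolding T_def Tset_def using inj by (simp add: card_image)
    have finT: "finite T" unfolding T_def Tset_def by simp
    have Tne: "T \<noteq> {}" using Npos by (auto simp: T_def Tset_def)
    have Tsel: "\<And>t. t \<in> T \<Longrightarrow> \<exists>m<N. t = sel m" by (auto simp: T_def Tset_def)
    have Dn_lt: "Dn < d"
    proof -
      have "Dn \<in> length ` T" unfolding Dn_def using finT Tne by (intro Max_in) auto
      then show ?thesis using Tsel allN by fastforce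
    qed
    have lenT: "\<And>t. t \<in> T \<Longrightarrow> length t \<le> Dn" unfolding Dn_def using finT by auto
    define cnt where "cnt l = card {t \<in> T. length t = l}" for l
    have Nsum: "real N = (\<Sum>l<Dn+1. real (cnt l))"
    proof -
      have "(\<Sum>l<Dn+1. \<Sum>t\<in>{t \<in> T. length t = l}. (1::nat)) = (\<Sum>t\<in>T. 1)"
        by (rule sum.group) (use finT lenT in \<open>auto simp: less_Suc_eq_le\<close>)
      then have "(\<Sum>l<Dn+1. cnt l) = N" using cardT by (simp add: cnt_def)
      then show ?thesis by (metis of_nat_sum)
    qed
    have cnt_nodes: "{t \<in> T. length t = l} \<subseteq> nodes K l" for l
      using Tsel opt allN pl by (fastforce simp: nodes_def)
    have cnt_le1: "real (cnt l) \<le> real K ^ l" for l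
    proof -
      have "cnt l \<le> card (nodes K l)" unfolding cnt_def by (rule card_mono[OF nodes_finite cnt_nodes])
      then show ?thesis by (simp add: card_nodes)
    qed
    have cnt_le2: "real (cnt l) \<le> x ^ l" if "d0 \<le> l" "l \<le> d" for l
    proof -
      let ?E = "{i \<in> nodes K l. ?vs - ?v i \<le> real (d - l) * ?D}"
      have sub: "{t \<in> T. length t = l} \<subseteq> ?E"
      proof
        fix t assume t: "t \<in> {t \<in> T. length t = l}"
        then obtain m where m: "m < N" "t = sel m" using Tsel by blast
        show "t \<in> ?E" using t cnt_nodes eps[OF m(1) pl[of m]] m by auto
      qed
      have finE: "finite ?E" using nodes_finite by simp
      have "real (cnt l) \<le> real (card ?E)" unfolding cnt_def using card_mono[OF finE sub] by simp
      also have "\<dots> = prop_opt K f zmax z0 d l (real (d - l) * ?D) * real K ^ l"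
        using Kp by (simp add: prop_opt_def)
      also have "\<dots> \<le> lam ^ l * real K ^ l"
        by (rule mult_right_mono[OF popt[OF that]]) simp
      also have "\<dots> = x ^ l" by (simp add: x_def power_mult_distrib)
      finally show ?thesis .
    qed
    have "real N \<le> (\<Sum>l<Dn+1. (if l \<in> {..d0} then real K ^ l else 0) + x ^ l)"
      unfolding Nsum
    proof (rule sum_mono)
      fix l assume l: "l \<in> {..<Dn+1}"
      show "real (cnt l) \<le> (if l \<in> {..d0} then real K ^ l else 0) + x ^ l"
      proof (cases "l \<le> d0")
        case True
        have "0 \<le> x ^ l" using x1 by simp
        moreover have "(if l \<in> {..d0} then real K ^ l else 0) = real K ^ l" using True by simp
        ultimately show ?thesis using cnt_le1[of l] by linarith
      next
        case False then show ?thesis using cnt_le2[of l] l Dn_lt by simp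
      qed
    qed
    also have "\<dots> = (\<Sum>l\<in>{..<Dn+1} \<inter> {..d0}. real K ^ l) + (\<Sum>l<Dn+1. x ^ l)"
      by (simp add: sum.distrib sum.inter_restrict)
    also have "(\<Sum>l\<in>{..<Dn+1} \<inter> {..d0}. real K ^ l) \<le> (\<Sum>l<d0+1. real K ^ l)"
      by (rule sum_mono2) auto
    also have "(\<Sum>l<Dn+1. x ^ l) = (x ^ (Dn+1) - 1) / (x - 1)"
      by (rule geometric_sum) (use x1 in simp)
    finally have Nle: "real N \<le> n0 + (x ^ (Dn+1) - 1) / (x - 1)" using n0eq by simp
    define M where "M = real N - n0"
    have Mpos: "M > 0" using Nbig by (simp add: M_def n0_def)
    have "M < x ^ (Dn+1) / (x - 1)"
      using Nle x1 by (simp add: M_def divide_simps algebra_simps)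
    then have "ln M < ln (x ^ (Dn+1) / (x - 1))" using Mpos by simp
    also have "\<dots> = real (Dn+1) * ln x - ln (x - 1)"
      using x1 ln_realpow[of x "Dn+1"] by (simp add: ln_div del: power_Suc)
    finally have lnM: "ln M < real (Dn+1) * ln x - ln (x - 1)" .
    have lnx: "ln x > 0" using x1 by simp
    have key: "ln M / ln x + ln (x - 1) / ln x < real Dn + 1"
    proof -
      have "(ln M + ln (x - 1)) / ln x < real Dn + 1"
        using lnM lnx by (simp add: divide_simps algebra_simps)
      then show ?thesis by (simp add: add_divide_distrib)
    qed
    obtain m where m: "m < N" "iN = sel m" using Tsel iN T_def by blast
    have lenIN: "length iN = Dn" using iNl by (simp add: Dn_def T_def)
    have "?vs - ?v iN \<le> real (d - Dn) * ?D" using eps[OF m(1) pl[of m]] m lenIN by simp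
    also have "\<dots> \<le> (real d - ln M / ln x - ln (x - 1) / ln x + 1) * ?D"
    proof (rule mult_right_mono)
      show "real (d - Dn) \<le> real d - ln M / ln x - ln (x - 1) / ln x + 1"
        using key Dn_lt by (simp add: of_nat_diff)
      show "0 \<le> ?D" by (rule Delta_nonneg[OF Kp])
    qed
    finally show "?vs - ?v iN
                 \<le> (real d - ln (real N - (real K ^ (d0 + 1) - 1) / (real K - 1)) / ln (lam * real K)
                     - ln (lam * real K - 1) / ln (lam * real K) + 1) * ?D"
      by (simp add: M_def n0_def x_def)
  qed
qed

end
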